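(* Let $n\ge 1$, let $\pi:\mathbb{R}^{n+1}\to\mathbb{R}^n$, $(x^1,\dots,x^n,u)\mapsto (x^1,\dots,x^n)$, and consider the Lagrangian $\mathcal{L}_{\min\Sigma}=[L\,d\mathbf{x}]$ with $L=L_{\min\Sigma}=\sqrt{1+\sum_{k=1}^n u_{x^k}^2}$ and its Euler–Lagrange equation $\mathcal{E}_{\min\Sigma}=\{\mathbf{E}_u(\mathcal{L}_{\min\Sigma})=0\}$ (the $n$-dimensional minimal area surface equation $\sum_i D_i(u_{x^i}/L)=0$). Consider the sections $\varphi_1=1$, $\varphi_2^i=u_{x^i}$ ($1\le i\le n$), $\varphi_3^{ij}=x^j u_{x^i}-x^i u_{x^j}$ ($1\le i,j\le n$), and $\varphi_4=u-\sum_{k=1}^n x^k u_{x^k}$. (1) For $\varphi\in\{\varphi_1,\varphi_2^i,\varphi_3^{ij}\}$ one has $[\mathfrak{D}_{\varphi}(\mathcal{L}_{\min\Sigma})]=0$ on the whole jet space $J^\infty(\pi)$, i.e. these are Noether symmetries of $\mathcal{L}_{\min\Sigma}$; the corresponding conserved currents give the following continuity equations on $\mathcal{E}_{\min\Sigma}^\infty$, respectively: $$\sum_{i=1}^n \bar D_i(\partial L/\partial u_{x^i})=0,$$ $$\bar D_i\big(u_{x^i}\,\partial L/\partial u_{x^i}-L\big)+\sum_{j\ne i}\bar D_j\big(u_{x^i}\,\partial L/\partial u_{x^j}\big)=0,$$ $$\bar D_i\big(x^jL-\varphi_3^{ij}u_{x^i}/L\big)-\bar D_j\big(x^iL+\varphi_3^{ij}u_{x^j}/L\big)-\sum_{k\ne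 i,j}\bar D_k\big(\varphi_3^{ij}u_{x^k}/L\big)=0.$$ (2) The dilatation $\varphi_4$ preserves the Lagrangian on the equation: $[\mathfrak{D}_{\varphi_4}(\mathcal{L}_{\min\Sigma})]=n\,\mathcal{L}_{\min\Sigma}$ on $\mathcal{E}_{\min\Sigma}$, hence $\mathbf{E}_u(\mathfrak{D}_{\varphi_4}(\mathcal{L}_{\min\Sigma}))=n\,\mathbf{E}_u(\mathcal{L}_{\min\Sigma})=0$ on $\mathcal{E}_{\min\Sigma}$. Moreover, if $s^i$, $1\le i\le n$, are nonlocal variables with $s^i_{x^i}=L$, then the nonlocal continuity equation $$\sum_i \tilde D_i\Big(s^i-x^iL-\frac{u\,u_{x^i}}{\sqrt{1+\sum_j u_{x^j}^2}}+\frac{u_{x^i}\sum_j x^ju_{x^j}}{\sqrt{1+\sum_k u_{x^k}^2}}\Big)=0$$ holds (it is assigned to the symmetry $\varphi_4$).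
   Context: $J^\infty(\pi)$ is the infinite jet space of $\pi$ with coordinates $x^i,u,u_\sigma$ ($\sigma$ multi-indices); $D_i$ are total derivatives, $\bar D_i$ their restrictions to the infinite prolongation $\mathcal{E}_{\min\Sigma}^\infty$, and $\tilde D_i$ their extensions to the covering with nonlocal variables $s^i$ (with $\tilde D_i(s^i)=L$). For a section $\varphi$, $\mathfrak{D}_\varphi=\sum_\sigma D_\sigma(\varphi)\,\partial/\partial u_\sigma$ is the evolutionary vector field with generating section $\varphi$. For a horizontal $n$-form $L\,d\mathbf{x}$, $[\,\cdot\,]$ denotes its class modulo total divergences $d_h(\cdot)$ (the functional), where $d_h=\sum_i dx^i\otimes D_i$; $\mathbf{E}_u$ is the Euler–Lagrange operator. "On $\mathcal{E}_{\min\Sigma}$" means modulo the equation and its differential consequences. *)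

theory Defs
  imports "HOL-Analysis.Analysis"
begin

text \<open>The base is real^'n (n = CARD('n)), fibre coordinate u.
 A point of J^infinity(pi) is (x, w) where w l is the jet coordinate
 u_l for a list l of indices (w [] = u, w [i] = u_{x^i},
 w (i # l) = D_i applied to w l); genuine jets are symmetric (see symjet).
 A differential function is a function of (x, w) depending on finitely many w l.\<close>

type_synonym 'n dfun = "real^'n \<Rightarrow> ('n list \<Rightarrow> real) \<Rightarrow> real"

definition lists_le :: "nat \<Rightarrow> ('n::finite) list set" where
  "lists_le m = {l. length l \<le> m}"

definition symjet :: "(('n::finite) list \<Rightarrow> real) \<Rightarrow> bool" where
  "symjet w \<longleftrightarrow> (\<forall>l l'. mset l = mset l' \<longrightarrow> w l = w l')"

definition order_le :: "nat \<Rightarrow> ('n::finite) dfun \<Rightarrow> bool" where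
  "order_le m G \<longleftrightarrow> (\<forall>x w w'. (\<forall>l\<in>lists_le m. w l = w' l) \<longrightarrow> G x w = G x w')"

definition xpd :: "'n::finite \<Rightarrow> 'n dfun \<Rightarrow> 'n dfun" where
  "xpd i G x w = deriv (\<lambda>t. G (x + t *\<^sub>R axis i 1) w) 0"

definition wpd :: "('n::finite) list \<Rightarrow> 'n dfun \<Rightarrow> 'n dfun" where
  "wpd l G x w = deriv (\<lambda>t. G x (w(l := w l + t))) 0"

text \<open>Total derivative D_i of a differential function of order at most m.\<close>
definition totD :: "nat \<Rightarrow> 'n::finite \<Rightarrow> 'n dfun \<Rightarrow> 'n dfun" where
  "totD m i G x w = xpd i G x w + (\<Sum>l\<in>lists_le m. w (i # l) * wpd l G x w)"

fun totDs :: "nat \<Rightarrow> ('n::finite) list \<Rightarrow> 'n dfun \<Rightarrow> 'n dfun" where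
  "totDs m [] G = G"
| "totDs m (i # l) G = totD (m + length l) i (totDs m l G)"

text \<open>Evolutionary derivative D_phi(G), phi of order mphi, G of order m.\<close>
definition evder :: "nat \<Rightarrow> ('n::finite) dfun \<Rightarrow> nat \<Rightarrow> 'n dfun \<Rightarrow> 'n dfun" where
  "evder mphi phi m G x w = (\<Sum>l\<in>lists_le m. totDs mphi l phi x w * wpd l G x w)"

text \<open>Euler--Lagrange operator E_u of a differential function of order m.\<close>
definition EL :: "nat \<Rightarrow> ('n::finite) dfun \<Rightarrow> 'n dfun" where
  "EL m G x w = (\<Sum>l\<in>lists_le m. (-1) ^ length l * totDs m l (wpd l G) x w)"

datatype 'n pdir = PDx 'n | PDw "'n list"

fun pdapp :: "('n::finite) pdir list \<Rightarrow> 'n dfun \<Rightarrow> 'n dfun" where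
  "pdapp [] G = G"
| "pdapp (PDx i # ds) G = xpd i (pdapp ds G)"
| "pdapp (PDw l # ds) G = wpd l (pdapp ds G)"

definition dfun_smooth :: "('n::finite) dfun \<Rightarrow> bool" where
  "dfun_smooth G \<longleftrightarrow> (\<forall>ds x w.
     (\<forall>i. (\<lambda>t. pdapp ds G (x + t *\<^sub>R axis i 1) w) differentiable (at (0::real))) \<and>
     (\<forall>l. (\<lambda>t. pdapp ds G x (w(l := w l + t))) differentiable (at (0::real))))"

definition is_dfun :: "('n::finite) dfun \<Rightarrow> bool" where
  "is_dfun G \<longleftrightarrow> (\<exists>m. order_le m G) \<and> dfun_smooth G"

text \<open>F is a total divergence sum_k D_k(P^k) at all points of a set A of the jet space,
 i.e. [F d x] = 0 there.\<close>
definition total_div_on :: "(real^'n \<Rightarrow> ('n list \<Rightarrow> real) \<Rightarrow> bool) \<Rightarrow> ('n::finite) dfun \<Rightarrow> bool" where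
  "total_div_on A F \<longleftrightarrow> (\<exists>P m. (\<forall>k. is_dfun (P k) \<and> order_le m (P k)) \<and>
      (\<forall>x w. A x w \<longrightarrow> F x w = (\<Sum>k\<in>UNIV. totD m k (P k) x w)))"

definition Lmin :: "('n::finite) dfun" where
  "Lmin x w = sqrt (1 + (\<Sum>k\<in>UNIV. (w [k])\<^sup>2))"

definition phi1 :: "('n::finite) dfun" where "phi1 x w = 1"
definition phi2 :: "'n::finite \<Rightarrow> 'n dfun" where "phi2 i x w = w [i]"
definition phi3 :: "'n::finite \<Rightarrow> 'n \<Rightarrow> 'n dfun" where
  "phi3 i j x w = x $ j * w [i] - x $ i * w [j]"
definition phi4 :: "('n::finite) dfun" where
  "phi4 x w = w [] - (\<Sum>k\<in>UNIV. x $ k * w [k])"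

definition Jinf :: "real^'n \<Rightarrow> (('n::finite) list \<Rightarrow> real) \<Rightarrow> bool" where
  "Jinf x w \<longleftrightarrow> symjet w"

definition Einf :: "real^'n \<Rightarrow> (('n::finite) list \<Rightarrow> real) \<Rightarrow> bool" where
  "Einf x w \<longleftrightarrow> symjet w \<and> (\<forall>l. totDs 2 l (EL 1 Lmin) x w = 0)"

text \<open>Covering with nonlocal variables s^k: functions of (x, w, s);
 S i k = tilde D_i (s^k).\<close>
type_synonym 'n cdfun = "real^'n \<Rightarrow> ('n list \<Rightarrow> real) \<Rightarrow> ('n \<Rightarrow> real) \<Rightarrow> real"

definition tDc :: "nat \<Rightarrow> ('n::finite \<Rightarrow> 'n \<Rightarrow> 'n dfun) \<Rightarrow> 'n \<Rightarrow> 'n cdfun \<Rightarrow> 'n cdfun" where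
  "tDc m S i G x w s = totD m i (\<lambda>x' w'. G x' w' s) x w
      + (\<Sum>k\<in>UNIV. S i k x w * deriv (\<lambda>t. G x w (s(k := s k + t))) 0)"

end

theory Submission
  imports Defs
begin


definition dline :: "real^'n \<Rightarrow> ('n list \<Rightarrow> real) \<Rightarrow> ('n::finite) dfun \<Rightarrow> 'n dfun" where
  "dline v d G x w = deriv (\<lambda>t. G (x + t *\<^sub>R v) (\<lambda>l. w l + t * d l)) 0"

inductive CC :: "('n::finite) dfun \<Rightarrow> bool" where
  cc_const: "CC (\<lambda>x w. c)"
| cc_x: "CC (\<lambda>x w. x $ j)"
| cc_w: "CC (\<lambda>x w. w l)"
| cc_add: "CC f \<Longrightarrow> CC g \<Longrightarrow> CC (\<lambda>x w. f x w + g x w)"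
| cc_mult: "CC f \<Longrightarrow> CC g \<Longrightarrow> CC (\<lambda>x w. f x w * g x w)"
| cc_inv: "CC f \<Longrightarrow> (\<forall>x w. f x w \<noteq> 0) \<Longrightarrow> CC (\<lambda>x w. inverse (f x w))"
| cc_sqrt: "CC f \<Longrightarrow> (\<forall>x w. f x w > 0) \<Longrightarrow> CC (\<lambda>x w. sqrt (f x w))"


lemma dlineI: "((\<lambda>t. G (x + t *\<^sub>R v) (\<lambda>l. w l + t * d l)) has_real_derivative D) (at 0) \<Longrightarrow> dline v d G x w = D"
  unfolding dline_def by (rule DERIV_imp_deriv)

lemma CC_dline:
  assumes "CC f"
  shows "CC (dline v d f) \<and> (\<forall>x w. ((\<lambda>t. f (x + t *\<^sub>R v) (\<lambda>l. w l + t * d l)) has_real_derivative dline v d f x w) (at 0))"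
  using assms
proof (induction f)
  case (cc_const c)
  have e: "dline v d (\<lambda>x w. c) = (\<lambda>x w. 0)"
    by (rule ext)+ (simp add: dline_def)
  show ?case unfolding e by (auto intro: CC.intros)
next
  case (cc_x j)
  have d: "((\<lambda>t. (x + t *\<^sub>R v) $ j) has_real_derivative v $ j) (at 0)" for x :: "real^'a"
    by (auto intro!: derivative_eq_intros)
  have e: "dline v d (\<lambda>x w. x $ j) = (\<lambda>x w. v $ j)"
    by (rule ext)+ (rule dlineI, rule d)
  show ?case unfolding e using d by (auto intro: CC.intros)
next
  case (cc_w l)
  have d: "((\<lambda>t. w l + t * d l) has_real_derivative d l) (at 0)" for w :: "'a list \<Rightarrow> real"
    by (auto intro!: derivative_eq_intros)
  have e: "dline v d (\<lambda>x w. w l) = (\<lambda>x w. d l)"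
    by (rule ext)+ (rule dlineI, rule d)
  show ?case unfolding e using d by (auto intro: CC.intros)
next
  case (cc_add f g)
  have d: "((\<lambda>t. f (x + t *\<^sub>R v) (\<lambda>l. w l + t * d l) + g (x + t *\<^sub>R v) (\<lambda>l. w l + t * d l))
     has_real_derivative dline v d f x w + dline v d g x w) (at 0)" for x w
    using cc_add.IH by (auto intro!: DERIV_add)
  have e: "dline v d (\<lambda>x w. f x w + g x w) = (\<lambda>x w. dline v d f x w + dline v d g x w)"
    by (rule ext)+ (rule dlineI, rule d)
  show ?case unfolding e using d cc_add.IH by (auto intro: CC.intros)
next
  case (cc_mult f g)
  have d: "((\<lambda>t. f (x + t *\<^sub>R v) (\<lambda>l. w l + t * d l) * g (x + t *\<^sub>R v) (\<lambda>l. w l + t * d l))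
     has_real_derivative dline v d f x w * g x w + f x w * dline v d g x w) (at 0)" for x w
    using DERIV_mult[OF conjunct2[OF cc_mult.IH(1), rule_format] conjunct2[OF cc_mult.IH(2), rule_format], of x w x w]
    by (simp add: mult.commute)
  have e: "dline v d (\<lambda>x w. f x w * g x w) = (\<lambda>x w. dline v d f x w * g x w + f x w * dline v d g x w)"
    by (rule ext)+ (rule dlineI, rule d)
  show ?case unfolding e using d cc_mult.IH cc_mult.hyps by (auto intro!: CC.intros)
next
  case (cc_inv f)
  have d: "((\<lambda>t. inverse (f (x + t *\<^sub>R v) (\<lambda>l. w l + t * d l)))
     has_real_derivative (-1) * (inverse (f x w) * (dline v d f x w * inverse (f x w)))) (at 0)" for x w
    using DERIV_inverse'[OF conjunct2[OF cc_inv.IH, rule_format, of x w]] cc_inv.hyps(2)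
    by (simp add: mult.assoc)
  have e: "dline v d (\<lambda>x w. inverse (f x w)) = (\<lambda>x w. (-1) * (inverse (f x w) * (dline v d f x w * inverse (f x w))))"
    by (rule ext)+ (rule dlineI, rule d)
  have c: "CC (\<lambda>x w. (-1) * (inverse (f x w) * (dline v d f x w * inverse (f x w))))"
    using cc_inv.IH cc_inv.hyps by (intro CC.intros) auto
  show ?case unfolding e using d c by blast
next
  case (cc_sqrt f)
  have d: "((\<lambda>t. sqrt (f (x + t *\<^sub>R v) (\<lambda>l. w l + t * d l)))
     has_real_derivative dline v d f x w * ((1/2) * inverse (sqrt (f x w)))) (at 0)" for x w
  proof -
    have g0: "f (x + 0 *\<^sub>R v) (\<lambda>l. w l + 0 * d l) = f x w" by simp
    have "f (x + 0 *\<^sub>R v) (\<lambda>l. w l + 0 * d l) > 0" using cc_sqrt.hyps(2) g0 by auto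
    from DERIV_chain2[OF DERIV_real_sqrt[OF this] conjunct2[OF cc_sqrt.IH, rule_format, of x w]]
    show ?thesis by (simp add: g0 field_simps)
  qed
  have e: "dline v d (\<lambda>x w. sqrt (f x w)) = (\<lambda>x w. dline v d f x w * ((1/2) * inverse (sqrt (f x w))))"
    by (rule ext)+ (rule dlineI, rule d)
  have pos: "\<forall>x w. sqrt (f x w) \<noteq> 0" using cc_sqrt.hyps(2) by (metis less_irrefl real_sqrt_eq_zero_cancel_iff)
  have c: "CC (\<lambda>x w. dline v d f x w * ((1/2) * inverse (sqrt (f x w))))"
    using cc_sqrt.IH cc_sqrt.hyps pos by (intro CC.intros) auto
  show ?case unfolding e using d c by blast
qed

lemma CC_D: "CC f \<Longrightarrow> ((\<lambda>t. f (x + t *\<^sub>R v) (\<lambda>l. w l + t * d l)) has_real_derivative dline v d f x w) (at 0)"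
  using CC_dline by blast

lemma CC_dl: "CC f \<Longrightarrow> CC (dline v d f)"
  using CC_dline by blast

definition dl :: "'n list \<Rightarrow> 'n list \<Rightarrow> real" where "dl l l' = (if l' = l then 1 else 0)"

lemma xpd_dline: "xpd i G = dline (axis i 1) (\<lambda>_. 0) G"
  by (rule ext)+ (simp add: xpd_def dline_def)

lemma wpd_dline: "wpd l G = dline 0 (dl l) G"
proof (rule ext)+
  fix x w
  have e: "(\<lambda>l'. w l' + t * dl l l') = w(l := w l + t)" for t
    by (rule ext) (simp add: dl_def)
  then show "wpd l G x w = dline 0 (dl l) G x w"
    unfolding wpd_def dline_def by (simp only: e scaleR_zero_right add_0_right)
qed

lemma CC_xpd: "CC G \<Longrightarrow> CC (xpd i G)" by (simp add: xpd_dline CC_dl)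
lemma CC_wpd: "CC G \<Longrightarrow> CC (wpd l G)" by (simp add: wpd_dline CC_dl)

lemma CC_pdapp: "CC G \<Longrightarrow> CC (pdapp ds G)"
proof (induction ds)
  case Nil then show ?case by simp
next
  case (Cons a ds) then show ?case by (cases a) (auto simp: CC_xpd CC_wpd)
qed

lemma CC_smooth: "CC G \<Longrightarrow> dfun_smooth G"
  unfolding dfun_smooth_def
proof (intro allI conjI)
  fix ds x w i l assume G: "CC G"
  have C: "CC (pdapp ds G)" using CC_pdapp[OF G] .
  have "(\<lambda>t. pdapp ds G (x + t *\<^sub>R axis i 1) (\<lambda>l. w l + t * 0)) differentiable (at 0)"
    using CC_D[OF C, of x "axis i 1" w "\<lambda>_. 0"] unfolding real_differentiable_def by blast
  then show "(\<lambda>t. pdapp ds G (x + t *\<^sub>R axis i 1) w) differentiable (at 0)" by simp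
  have "(\<lambda>t. pdapp ds G (x + t *\<^sub>R 0) (\<lambda>l'. w l' + t * dl l l')) differentiable (at 0)"
    using CC_D[OF C, of x 0 w "dl l"] unfolding real_differentiable_def by blast
  moreover have e: "(\<lambda>l'. w l' + t * dl l l') = w(l := w l + t)" for t
    by (rule ext) (simp add: dl_def)
  ultimately show "(\<lambda>t. pdapp ds G x (w(l := w l + t))) differentiable (at 0)"
    by (simp only: e scaleR_zero_right add_0_right)
qed

lemma CC_minus: "CC f \<Longrightarrow> CC (\<lambda>x w. - f x w)"
  using cc_mult[OF cc_const[of "-1"], of f] by simp

lemma CC_diff: "CC f \<Longrightarrow> CC g \<Longrightarrow> CC (\<lambda>x w. f x w - g x w)"
  using cc_add[OF _ CC_minus[of g], of f] by simp

lemma CC_sum: "finite A \<Longrightarrow> (\<And>k. k \<in> A \<Longrightarrow> CC (f k)) \<Longrightarrow> CC (\<lambda>x w. \<Sum>k\<in>A. f k x w)"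
proof (induction A rule: finite_induct)
  case empty then show ?case using cc_const[of 0] by simp
next
  case (insert a A) then show ?case using cc_add[of "f a" "\<lambda>x w. \<Sum>k\<in>A. f k x w"] by simp
qed

lemma CC_pow: "CC f \<Longrightarrow> CC (\<lambda>x w. f x w ^ n)"
proof (induction n)
  case 0 then show ?case using cc_const[of 1] by simp
next
  case (Suc n) then show ?case using cc_mult[of f "\<lambda>x w. f x w ^ n"] by simp
qed

lemma D_const: "dline v d (\<lambda>x w. c) x w = 0"
  by (simp add: dline_def)

lemma D_x: "dline v d (\<lambda>x w. x $ j) x w = v $ j"
  by (rule dlineI) (auto intro!: derivative_eq_intros)

lemma D_w: "dline v d (\<lambda>x w. w l) x w = d l"
  by (rule dlineI) (auto intro!: derivative_eq_intros)

lemma D_add: "CC f \<Longrightarrow> CC g \<Longrightarrow> dline v d (\<lambda>x w. f x w + g x w) x w = dline v d f x w + dline v d g x w"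
  by (rule dlineI) (intro DERIV_add CC_D)

lemma D_diff: "CC f \<Longrightarrow> CC g \<Longrightarrow> dline v d (\<lambda>x w. f x w - g x w) x w = dline v d f x w - dline v d g x w"
  by (rule dlineI) (intro DERIV_diff CC_D)

lemma D_minus: "CC f \<Longrightarrow> dline v d (\<lambda>x w. - f x w) x w = - dline v d f x w"
  by (rule dlineI) (intro DERIV_minus CC_D)

lemma D_mult: "CC f \<Longrightarrow> CC g \<Longrightarrow> dline v d (\<lambda>x w. f x w * g x w) x w = dline v d f x w * g x w + f x w * dline v d g x w"
  by (rule dlineI) (use DERIV_mult[OF CC_D[of f] CC_D[of g], of x v w d x v w d] in \<open>simp add: mult.commute\<close>)

lemma D_sum: "finite A \<Longrightarrow> (\<And>k. k \<in> A \<Longrightarrow> CC (f k)) \<Longrightarrow> dline v d (\<lambda>x w. \<Sum>k\<in>A. f k x w) x w = (\<Sum>k\<in>A. dline v d (f k) x w)"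
  by (rule dlineI) (intro DERIV_sum CC_D)

lemma D_inv: "CC f \<Longrightarrow> f x w \<noteq> 0 \<Longrightarrow> dline v d (\<lambda>x w. inverse (f x w)) x w = - dline v d f x w / (f x w)^2"
proof (rule dlineI)
  assume C: "CC f" and nz: "f x w \<noteq> 0"
  have g0: "f (x + 0 *\<^sub>R v) (\<lambda>l. w l + 0 * d l) = f x w" by simp
  show "((\<lambda>t. inverse (f (x + t *\<^sub>R v) (\<lambda>l. w l + t * d l))) has_real_derivative - dline v d f x w / (f x w)\<^sup>2) (at 0)"
    using DERIV_inverse'[OF CC_D[OF C, of x v w d]] nz
    by (simp add: power2_eq_square field_simps)
qed

lemma D_sqrt: "CC f \<Longrightarrow> f x w > 0 \<Longrightarrow> dline v d (\<lambda>x w. sqrt (f x w)) x w = dline v d f x w / (2 * sqrt (f x w))"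
proof (rule dlineI)
  assume C: "CC f" and p: "f x w > 0"
  have g0: "f (x + 0 *\<^sub>R v) (\<lambda>l. w l + 0 * d l) = f x w" by simp
  have "f (x + 0 *\<^sub>R v) (\<lambda>l. w l + 0 * d l) > 0" using p g0 by auto
  from DERIV_chain2[OF DERIV_real_sqrt[OF this] CC_D[OF C, of x v w d]]
  show "((\<lambda>t. sqrt (f (x + t *\<^sub>R v) (\<lambda>l. w l + t * d l))) has_real_derivative dline v d f x w / (2 * sqrt (f x w))) (at 0)"
    by (simp add: g0 field_simps)
qed

lemma D_pow: "CC f \<Longrightarrow> dline v d (\<lambda>x w. f x w ^ n) x w = of_nat n * f x w ^ (n - 1) * dline v d f x w"
proof (rule dlineI)
  assume C: "CC f"
  have g0: "f (x + 0 *\<^sub>R v) (\<lambda>l. w l + 0 * d l) = f x w" by simp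
  from DERIV_power[OF CC_D[OF C, of x v w d], of n]
  show "((\<lambda>t. f (x + t *\<^sub>R v) (\<lambda>l. w l + t * d l) ^ n) has_real_derivative of_nat n * f x w ^ (n - 1) * dline v d f x w) (at 0)"
    by (simp add: g0 field_simps)
qed



lemma fin_lists_le[simp]: "finite (lists_le m :: ('n::finite) list set)"
proof -
  have "lists_le m = {xs. set xs \<subseteq> (UNIV::'n set) \<and> length xs \<le> m}" by (auto simp: lists_le_def)
  then show ?thesis using finite_lists_length_le[of "UNIV::'n set" m] by simp
qed

lemma totD_dline: "totD m i G x w = dline (axis i 1) (\<lambda>_. 0) G x w + (\<Sum>l\<in>lists_le m. w (i # l) * dline 0 (dl l) G x w)"
  by (simp add: totD_def xpd_dline wpd_dline)

lemma T_const: "totD m i (\<lambda>x w. c) x w = 0"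
  by (simp add: totD_dline D_const)

lemma T_x: "totD m i (\<lambda>x w. x $ j) x w = (if j = i then 1 else 0)"
  by (simp add: totD_dline D_x axis_def)

lemma T_w: "totD m i (\<lambda>x w. w l) x w = (if l \<in> lists_le m then w (i # l) else 0)"
proof -
  have "(\<Sum>l'\<in>lists_le m. w (i # l') * dl l' l) = (\<Sum>l'\<in>lists_le m. if l' = l then w (i # l') else 0)"
    by (rule sum.cong) (auto simp: dl_def)
  also have "\<dots> = (if l \<in> lists_le m then w (i # l) else 0)"
    by (simp add: sum.delta)
  finally show ?thesis by (simp add: totD_dline D_w D_const)
qed

lemma T_add: "CC f \<Longrightarrow> CC g \<Longrightarrow> totD m i (\<lambda>x w. f x w + g x w) x w = totD m i f x w + totD m i g x w"
  by (simp add: totD_dline D_add algebra_simps sum.distrib)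

lemma T_diff: "CC f \<Longrightarrow> CC g \<Longrightarrow> totD m i (\<lambda>x w. f x w - g x w) x w = totD m i f x w - totD m i g x w"
  by (simp add: totD_dline D_diff algebra_simps sum_subtractf)

lemma T_minus: "CC f \<Longrightarrow> totD m i (\<lambda>x w. - f x w) x w = - totD m i f x w"
  by (simp add: totD_dline D_minus algebra_simps sum_negf)

lemma T_mult: "CC f \<Longrightarrow> CC g \<Longrightarrow> totD m i (\<lambda>x w. f x w * g x w) x w = totD m i f x w * g x w + f x w * totD m i g x w"
  by (simp add: totD_dline D_mult algebra_simps sum.distrib sum_distrib_left sum_distrib_right)

lemma T_sum: "finite A \<Longrightarrow> (\<And>k. k \<in> A \<Longrightarrow> CC (f k)) \<Longrightarrow> totD m i (\<lambda>x w. \<Sum>k\<in>A. f k x w) x w = (\<Sum>k\<in>A. totD m i (f k) x w)"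
  by (simp add: totD_dline D_sum sum.distrib sum_distrib_left sum.swap[of _ A])

lemma T_inv: "CC f \<Longrightarrow> f x w \<noteq> 0 \<Longrightarrow> totD m i (\<lambda>x w. inverse (f x w)) x w = - totD m i f x w / (f x w)^2"
  by (simp add: totD_dline D_inv sum_divide_distrib[symmetric] diff_divide_distrib add_divide_distrib sum_negf)

lemma T_sqrt: "CC f \<Longrightarrow> f x w > 0 \<Longrightarrow> totD m i (\<lambda>x w. sqrt (f x w)) x w = totD m i f x w / (2 * sqrt (f x w))"
  by (simp add: totD_dline D_sqrt add_divide_distrib sum_divide_distrib)

lemma T_pow: "CC f \<Longrightarrow> totD m i (\<lambda>x w. f x w ^ n) x w = of_nat n * f x w ^ (n - 1) * totD m i f x w"
  by (simp add: totD_dline D_pow algebra_simps sum_distrib_left)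

lemma wpd_const0: "(\<And>a. G x (w(l := a)) = G x w) \<Longrightarrow> wpd l G x w = 0"
  unfolding wpd_def by simp

lemma totD_trunc:
  assumes o: "order_le m G" and mm: "m \<le> m'"
  shows "totD m' i G x w = totD m i G x w"
proof -
  have sub: "lists_le m \<subseteq> lists_le m'" using mm by (auto simp: lists_le_def)
  have z: "w (i # l) * wpd l G x w = 0" if "l \<in> lists_le m' - lists_le m" for l
  proof -
    have "G x (w(l := a)) = G x w" for a
      using o that unfolding order_le_def by (metis fun_upd_other DiffD2)
    then show ?thesis by (simp add: wpd_const0)
  qed
  have "(\<Sum>l\<in>lists_le m'. w (i # l) * wpd l G x w) = (\<Sum>l\<in>lists_le m. w (i # l) * wpd l G x w)"
    using z by (intro sum.mono_neutral_right[OF fin_lists_le sub]) auto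
  then show ?thesis by (simp add: totD_def)
qed



lemma Lmin_eq: "Lmin = (\<lambda>x w. sqrt (1 + (\<Sum>k\<in>UNIV. (w [k])\<^sup>2)))"
  by (simp add: fun_eq_iff Lmin_def)

lemma Lmin_pos[simp]: "Lmin x w > 0"
proof -
  have "1 + (\<Sum>k\<in>UNIV. (w [k])\<^sup>2) > 0" by (simp add: add_pos_nonneg sum_nonneg)
  then show ?thesis by (simp add: Lmin_def)
qed

lemma Lmin_nz[simp]: "Lmin x w \<noteq> 0" using Lmin_pos[of x w] by linarith

lemma CC_Q: "CC (\<lambda>(x::real^'n::finite) w. 1 + (\<Sum>k\<in>UNIV. (w [k::'n])\<^sup>2))"
  apply (rule cc_add)
  apply (rule cc_const)
  apply (rule CC_sum)
  apply simp
  apply (rule CC_pow)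
  apply (rule cc_w)
  done

lemma CC_Lmin[simp]: "CC Lmin"
proof -
  note a = CC_Q
  have "\<forall>x w. (1::real) + (\<Sum>k\<in>UNIV. (w [k])\<^sup>2) > 0" by (simp add: add_pos_nonneg sum_nonneg)
  from cc_sqrt[OF a this] show ?thesis by (simp add: Lmin_eq)
qed

lemma CC_invL[simp]: "CC (\<lambda>x w. inverse (Lmin x w))"
  using cc_inv[OF CC_Lmin] by simp


lemmas CC_simps = cc_const cc_x cc_w cc_add cc_mult CC_minus CC_diff CC_sum CC_pow

lemma T_L: "1 \<le> m \<Longrightarrow> totD m i Lmin x w = (\<Sum>k\<in>UNIV. w [k] * w [i, k]) / Lmin x w"
proof -
  assume m: "1 \<le> m"
  have p: "(1::real) + (\<Sum>k\<in>UNIV. (w [k])\<^sup>2) > 0" by (simp add: add_pos_nonneg sum_nonneg)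
  have l: "[k] \<in> lists_le m" for k :: 'a using m by (simp add: lists_le_def)
  have "totD m i Lmin x w = totD m i (\<lambda>x w. sqrt (1 + (\<Sum>k\<in>UNIV. (w [k])\<^sup>2))) x w"
    by (simp add: Lmin_eq)
  also have "\<dots> = totD m i (\<lambda>x w. 1 + (\<Sum>k\<in>UNIV. (w [k])\<^sup>2)) x w / (2 * Lmin x w)"
    by (subst T_sqrt[OF CC_Q]) (auto simp: p Lmin_def)
  also have "totD m i (\<lambda>x w. 1 + (\<Sum>k\<in>UNIV. (w [k])\<^sup>2)) x w = (\<Sum>k\<in>UNIV. 2 * w [k] * w [i, k])"
    by (simp add: T_add T_const T_sum T_pow T_w l CC_simps)
  finally show ?thesis by (simp add: sum_distrib_left[symmetric] mult.assoc)
qed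

lemma T_invL: "1 \<le> m \<Longrightarrow> totD m i (\<lambda>x w. inverse (Lmin x w)) x w = - (\<Sum>k\<in>UNIV. w [k] * w [i, k]) / (Lmin x w)^3"
  by (simp add: T_inv T_L power2_eq_square power3_eq_cube)

lemma D_L: "dline v d Lmin x w = (\<Sum>k\<in>UNIV. w [k] * d [k]) / Lmin x w"
proof -
  have p: "(1::real) + (\<Sum>k\<in>UNIV. (w [k])\<^sup>2) > 0" by (simp add: add_pos_nonneg sum_nonneg)
  have "dline v d Lmin x w = dline v d (\<lambda>x w. sqrt (1 + (\<Sum>k\<in>UNIV. (w [k])\<^sup>2))) x w"
    by (simp add: Lmin_eq)
  also have "\<dots> = dline v d (\<lambda>x w. 1 + (\<Sum>k\<in>UNIV. (w [k])\<^sup>2)) x w / (2 * Lmin x w)"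
    by (subst D_sqrt[OF CC_Q]) (auto simp: p Lmin_def)
  also have "dline v d (\<lambda>x w. 1 + (\<Sum>k\<in>UNIV. (w [k])\<^sup>2)) x w = (\<Sum>k\<in>UNIV. 2 * w [k] * d [k])"
    by (simp add: D_add D_const D_sum D_pow D_w CC_simps)
  finally show ?thesis by (simp add: sum_distrib_left[symmetric] mult.assoc)
qed

lemma W_L: "wpd l Lmin x w = (if length l = 1 then w l / Lmin x w else 0)"
proof -
  have "wpd l Lmin x w = (\<Sum>k\<in>UNIV. w [k] * dl l [k]) / Lmin x w" by (simp add: wpd_dline D_L)
  also have "(\<Sum>k\<in>UNIV. w [k] * dl l [k]) = (\<Sum>k\<in>UNIV. if l = [k] then w l else 0)"
    by (rule sum.cong) (auto simp: dl_def)
  also have "\<dots> = (if length l = 1 then w l else 0)"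
  proof (cases "length l = 1")
    case True then obtain a where a: "l = [a]" by (cases l) auto
    then show ?thesis by (simp add: sum.delta)
  next
    case False then show ?thesis by (auto intro!: sum.neutral)
  qed
  finally show ?thesis by simp
qed

lemma W_L0[simp]: "wpd [] Lmin x w = 0" by (simp add: W_L)
lemma W_L1[simp]: "wpd [k] Lmin x w = w [k] / Lmin x w" by (simp add: W_L)

lemma lists_le1: "lists_le 1 = insert [] (range (\<lambda>k. [k]))"
  by (auto simp: lists_le_def length_Suc_conv le_Suc_eq)

lemma sum_le1: "(\<Sum>l\<in>lists_le 1. f l) = f [] + (\<Sum>k\<in>UNIV. f [k])"
proof -
  have "(\<Sum>l\<in>lists_le 1. f l) = f [] + sum f (range (\<lambda>k. [k]))"
    unfolding lists_le1 by (subst sum.insert) auto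
  also have "sum f (range (\<lambda>k. [k])) = (\<Sum>k\<in>UNIV. f [k])"
    by (subst sum.reindex) (auto simp: inj_on_def)
  finally show ?thesis .
qed

lemma symjetD: "symjet w \<Longrightarrow> mset l = mset l' \<Longrightarrow> w l = w l'"
  unfolding symjet_def by blast

lemma sym2: "symjet w \<Longrightarrow> w [a, b] = w [b, a]"
  by (rule symjetD) (auto simp: add_mset_commute)



lemma is_dfunI: "CC G \<Longrightarrow> order_le m G \<Longrightarrow> is_dfun G"
  unfolding is_dfun_def using CC_smooth by blast

lemma order_le_Lmin: "order_le 1 Lmin"
  unfolding order_le_def Lmin_def by (auto simp: lists_le_def)

lemma order_le_mult: "order_le m f \<Longrightarrow> order_le m g \<Longrightarrow> order_le m (\<lambda>x w. f x w * g x w)"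
  unfolding order_le_def by metis

lemma order_le_const: "order_le m (\<lambda>x w. c x)"
  unfolding order_le_def by simp

lemma phi1_eq: "phi1 = (\<lambda>x w. 1)" by (simp add: fun_eq_iff phi1_def)
lemma phi2_eq: "phi2 i = (\<lambda>x w. w [i])" by (simp add: fun_eq_iff phi2_def)
lemma phi3_eq: "phi3 i j = (\<lambda>x w. x $ j * w [i] - x $ i * w [j])" by (simp add: fun_eq_iff phi3_def)
lemma phi4_eq: "phi4 = (\<lambda>x w. w [] - (\<Sum>k\<in>UNIV. x $ k * w [k]))" by (simp add: fun_eq_iff phi4_def)

lemma l1[simp]: "[k] \<in> lists_le 1" "[k] \<in> lists_le (Suc 0)" "[] \<in> lists_le m" by (auto simp: lists_le_def)

lemma sum_ind: "(\<Sum>k\<in>(UNIV::'n::finite set). (if k = i then 1 else 0) * f k) = (f i :: real)"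
proof -
  have "(\<Sum>k\<in>(UNIV::'n set). (if k = i then 1 else 0) * f k) = (\<Sum>k\<in>UNIV. if k = i then f k else 0)"
    by (rule sum.cong) auto
  then show ?thesis by simp
qed

lemma part1: "total_div_on (Jinf :: real^'n::finite \<Rightarrow> _) (evder 0 phi1 1 Lmin)"
proof -
  have ev: "evder 0 phi1 1 Lmin x w = 0" for x :: "real^'n" and w
    unfolding evder_def sum_le1 by (simp add: phi1_eq T_const)
  show ?thesis unfolding total_div_on_def
    apply (rule exI[of _ "\<lambda>k x w. 0"], rule exI[of _ 0])
    using ev by (auto simp: T_const intro!: is_dfunI[of _ 0] cc_const order_le_const[of _ "\<lambda>x. 0"])
qed

lemma part2: "total_div_on (Jinf :: real^'n::finite \<Rightarrow> _) (evder 1 (phi2 i) 1 Lmin)"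
proof -
  define P where "P = (\<lambda>(k::'n) (x::real^'n) (w::'n list \<Rightarrow> real). (if k = i then 1 else 0) * Lmin x w)"
  have ev: "evder 1 (phi2 i) 1 Lmin x w = (\<Sum>k\<in>UNIV. w [k, i] * (w [k] / Lmin x w))" for x :: "real^'n" and w
    unfolding evder_def sum_le1 by (simp add: phi2_eq T_w)
  have sP: "(\<Sum>k\<in>UNIV. totD 1 k (P k) x w) = (\<Sum>k\<in>UNIV. w [k] * w [i, k]) / Lmin x w" for x w
  proof -
    have "(\<Sum>k\<in>UNIV. totD 1 k (P k) x w) = (\<Sum>k\<in>UNIV. (if k = i then 1 else 0) * totD 1 k Lmin x w)"
      unfolding P_def by (rule sum.cong) (auto simp: T_mult T_const)
    also have "\<dots> = totD 1 i Lmin x w" by (rule sum_ind)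
    finally show ?thesis by (simp add: T_L)
  qed
  have cP: "is_dfun (P k) \<and> order_le 1 (P k)" for k
  proof -
    have o: "order_le 1 (P k)" unfolding P_def
      by (rule order_le_mult[OF order_le_const order_le_Lmin])
    have "CC (P k)" unfolding P_def by (intro cc_mult cc_const CC_Lmin)
    with o show ?thesis using is_dfunI by blast
  qed
  have eq: "evder 1 (phi2 i) 1 Lmin x w = (\<Sum>k\<in>UNIV. totD 1 k (P k) x w)" if "Jinf x w" for x w
  proof -
    have s: "symjet w" using that by (simp add: Jinf_def)
    show ?thesis unfolding ev sP
      by (simp add: sum_divide_distrib sym2[OF s, of _ i] mult.commute)
  qed
  show ?thesis unfolding total_div_on_def
    using cP eq by blast
qed

lemma ind_mult: "(if P then 1 else 0) * (a::real) = (if P then a else 0)" by simp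
lemma if0_mult: "(if P then a else 0) * (b::real) = (if P then a * b else 0)" by simp
lemma if0_div: "(if P then a else 0) / (b::real) = (if P then a / b else 0)" by simp
lemma ind_mult2: "(a::real) * (if P then 1 else 0) = (if P then a else 0)" by simp

lemma part3: "total_div_on (Jinf :: real^'n::finite \<Rightarrow> _) (evder 1 (phi3 i j) 1 Lmin)"
proof -
  define P where "P = (\<lambda>(k::'n) (x::real^'n) (w::'n list \<Rightarrow> real). 
     ((if k = i then 1 else 0) * x $ j - (if k = j then 1 else 0) * x $ i) * Lmin x w)"
  have ev: "evder 1 (phi3 i j) 1 Lmin x w = (\<Sum>k\<in>UNIV.
      ((if j = k then 1 else 0) * w [i] + x $ j * w [k, i] - ((if i = k then 1 else 0) * w [j] + x $ i * w [k, j])) * (w [k] / Lmin x w))"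
    for x :: "real^'n" and w
    unfolding evder_def sum_le1 by (simp add: phi3_eq T_w T_x T_mult T_diff CC_simps)
  also have "\<dots> x w = x $ j * ((\<Sum>k\<in>UNIV. w [k, i] * w [k]) / Lmin x w) - x $ i * ((\<Sum>k\<in>UNIV. w [k, j] * w [k]) / Lmin x w)" for x w
    by (simp add: ind_mult if0_mult if0_div add_divide_distrib diff_divide_distrib distrib_right left_diff_distrib sum.distrib sum_subtractf sum_distrib_left sum_divide_distrib mult.assoc mult.commute[of "w [i]"])
  finally have ev2: "evder 1 (phi3 i j) 1 Lmin x w = x $ j * ((\<Sum>k\<in>UNIV. w [k, i] * w [k]) / Lmin x w) - x $ i * ((\<Sum>k\<in>UNIV. w [k, j] * w [k]) / Lmin x w)" for x w .
  have sP: "(\<Sum>k\<in>UNIV. totD 1 k (P k) x w) = x $ j * ((\<Sum>k\<in>UNIV. w [k] * w [i, k]) / Lmin x w) - x $ i * ((\<Sum>k\<in>UNIV. w [k] * w [j, k]) / Lmin x w)" for x w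
  proof -
    have "(\<Sum>k\<in>UNIV. totD 1 k (P k) x w) = (\<Sum>k\<in>UNIV. ((if k = i then 1 else 0) * x $ j - (if k = j then 1 else 0) * x $ i) * totD 1 k Lmin x w)"
      unfolding P_def by (rule sum.cong) (auto simp: T_mult T_const T_x T_diff CC_simps)
    also have "\<dots> = x $ j * totD 1 i Lmin x w - x $ i * totD 1 j Lmin x w"
      by (simp add: ind_mult if0_mult left_diff_distrib sum_subtractf)
    finally show ?thesis by (simp add: T_L)
  qed
  have cP: "is_dfun (P k) \<and> order_le 1 (P k)" for k
  proof -
    have o: "order_le 1 (P k)" unfolding P_def
      by (rule order_le_mult[OF order_le_const order_le_Lmin])
    have "CC (P k)" unfolding P_def by (intro cc_mult CC_diff cc_x cc_const CC_Lmin)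
    with o show ?thesis using is_dfunI by blast
  qed
  have eq: "evder 1 (phi3 i j) 1 Lmin x w = (\<Sum>k\<in>UNIV. totD 1 k (P k) x w)" if "Jinf x w" for x w
  proof -
    have s: "symjet w" using that by (simp add: Jinf_def)
    show ?thesis unfolding ev2 sP
      by (simp add: sym2[OF s, of _ i] sym2[OF s, of _ j] mult.commute)
  qed
  show ?thesis unfolding total_div_on_def
    using cP eq by blast
qed

lemma T_phi4: "totD (Suc 0) k phi4 x w = - (\<Sum>c\<in>UNIV. x $ c * w [k, c])"
proof -
  have "totD (Suc 0) k phi4 x w = w [k] - (\<Sum>c\<in>UNIV. (if c = k then 1 else 0) * w [c] + x $ c * w [k, c])"
    by (simp add: phi4_eq T_diff T_w T_sum T_mult T_x CC_simps)
  also have "\<dots> = - (\<Sum>c\<in>UNIV. x $ c * w [k, c])"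
    by (simp add: ind_mult sum.distrib)
  finally show ?thesis .
qed

lemma evder4: "evder 1 phi4 1 Lmin x w = - (\<Sum>k\<in>UNIV. (\<Sum>c\<in>UNIV. x $ c * w [k, c]) * w [k]) / Lmin x w"
  unfolding evder_def sum_le1
  by (simp add: T_phi4 sum_divide_distrib[symmetric] sum_negf)

lemma swap4: "symjet w \<Longrightarrow> (\<Sum>k\<in>UNIV. (\<Sum>c\<in>UNIV. x $ c * w [k, c]) * w [k]) = (\<Sum>k\<in>UNIV. x $ k * (\<Sum>c\<in>UNIV. w [c] * w [k, c]))"
proof -
  assume s: "symjet w"
  have "(\<Sum>k\<in>UNIV. (\<Sum>c\<in>UNIV. x $ c * w [k, c]) * w [k]) = (\<Sum>k\<in>UNIV. \<Sum>c\<in>UNIV. x $ c * w [k, c] * w [k])"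
    by (simp add: sum_distrib_right)
  also have "\<dots> = (\<Sum>c\<in>UNIV. \<Sum>k\<in>UNIV. x $ c * w [k, c] * w [k])"
    by (rule sum.swap)
  also have "\<dots> = (\<Sum>c\<in>UNIV. \<Sum>k\<in>UNIV. x $ c * w [c, k] * w [k])"
    apply (intro sum.cong refl) apply (subst sym2[OF s]) apply (rule refl) done
  also have "\<dots> = (\<Sum>c\<in>UNIV. x $ c * (\<Sum>k\<in>UNIV. w [k] * w [c, k]))"
    by (simp add: sum_distrib_left mult_ac)
  finally show ?thesis .
qed

lemma part7: "total_div_on (Einf :: real^'n::finite \<Rightarrow> _) (\<lambda>x w. evder 1 phi4 1 Lmin x w - real CARD('n) * Lmin x w)"
proof -
  define P where "P = (\<lambda>(k::'n) (x::real^'n) (w::'n list \<Rightarrow> real). (- x $ k) * Lmin x w)"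
  have sP: "(\<Sum>k\<in>UNIV. totD 1 k (P k) x w) = (\<Sum>k\<in>UNIV. - Lmin x w - x $ k * ((\<Sum>c\<in>UNIV. w [c] * w [k, c]) / Lmin x w))" for x w
    unfolding P_def by (rule sum.cong) (auto simp: T_mult T_minus T_x T_L CC_simps)
  have cP: "is_dfun (P k) \<and> order_le 1 (P k)" for k
  proof -
    have o: "order_le 1 (P k)" unfolding P_def
      by (rule order_le_mult[OF order_le_const order_le_Lmin])
    have "CC (P k)" unfolding P_def by (intro cc_mult CC_minus cc_x CC_Lmin)
    with o show ?thesis using is_dfunI by blast
  qed
  have eq: "evder 1 phi4 1 Lmin x w - real CARD('n) * Lmin x w = (\<Sum>k\<in>UNIV. totD 1 k (P k) x w)" if "Einf x w" for x w
  proof -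
    have s: "symjet w" using that by (simp add: Einf_def)
    have "(\<Sum>k\<in>UNIV. x $ k * ((\<Sum>c\<in>UNIV. w [c] * w [k, c]) / Lmin x w)) = (\<Sum>k\<in>UNIV. x $ k * (\<Sum>c\<in>UNIV. w [c] * w [k, c])) / Lmin x w"
      by (simp add: sum_divide_distrib[symmetric])
    then show ?thesis unfolding evder4 sP swap4[OF s]
      by (simp add: sum_subtractf)
  qed
  show ?thesis unfolding total_div_on_def
    using cP eq by blast
qed



lemma CC_divL[simp]: "CC f \<Longrightarrow> CC (\<lambda>x w. f x w / Lmin x w)"
  using cc_mult[OF _ CC_invL, of f] by (simp add: divide_inverse)

lemma T_divL: "CC f \<Longrightarrow> 1 \<le> m \<Longrightarrow> totD m i (\<lambda>x w. f x w / Lmin x w) x w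
   = totD m i f x w / Lmin x w - f x w * (\<Sum>c\<in>UNIV. w [c] * w [i, c]) / (Lmin x w)^3"
proof -
  assume f: "CC f" and m: "1 \<le> m"
  have "totD m i (\<lambda>x w. f x w / Lmin x w) x w = totD m i (\<lambda>x w. f x w * inverse (Lmin x w)) x w"
    by (simp add: divide_inverse)
  also have "\<dots> = totD m i f x w * inverse (Lmin x w) + f x w * totD m i (\<lambda>x w. inverse (Lmin x w)) x w"
    by (rule T_mult[OF f CC_invL])
  finally show ?thesis using m by (simp add: T_invL divide_inverse)
qed

lemma Tq: "1 \<le> m \<Longrightarrow> totD m k (\<lambda>x w. w [a] / Lmin x w) x w = w [k, a] / Lmin x w - w [a] * (\<Sum>c\<in>UNIV. w [c] * w [k, c]) / (Lmin x w)^3"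
  using T_divL[where f="\<lambda>x w. w [a]" and m=m and i=k and x=x and w=w, OF cc_w] by (simp add: T_w lists_le_def)

lemma wpdL_fun: "wpd [] Lmin = (\<lambda>x w. 0)" "wpd [k] Lmin = (\<lambda>x w. w [k] / Lmin x w)"
  by (simp_all add: fun_eq_iff)

lemma EL1: "EL 1 Lmin x w = - (\<Sum>k\<in>UNIV. totD 1 k (\<lambda>x w. w [k] / Lmin x w) x w)"
  unfolding EL_def sum_le1 by (simp add: wpdL_fun T_const sum_negf)

lemma Einf_sym: "Einf x w \<Longrightarrow> symjet w" by (simp add: Einf_def)

lemma Einf_EL: "Einf x w \<Longrightarrow> EL 1 Lmin x w = 0"
  unfolding Einf_def using totDs.simps(1) by metis

lemma Einf_div: "Einf x w \<Longrightarrow> (\<Sum>k\<in>UNIV. totD 1 k (\<lambda>x w. w [k] / Lmin x w) x w) = 0"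
  using Einf_EL[of x w] EL1[of x w] by simp

lemma part4: "Einf x w \<Longrightarrow> (\<Sum>i\<in>UNIV. totD 1 i (wpd [i] Lmin) x w) = 0"
  using Einf_div by (simp add: wpdL_fun)

lemma part5:
  assumes E: "Einf x w"
  shows "totD 1 i (\<lambda>x w. w [i] * wpd [i] Lmin x w - Lmin x w) x w
         + (\<Sum>j\<in>UNIV - {i}. totD 1 j (\<lambda>x w. w [i] * wpd [j] Lmin x w) x w) = 0"
proof -
  have s: "symjet w" using Einf_sym[OF E] .
  define f where "f j = totD 1 j (\<lambda>x w. w [i] * (w [j] / Lmin x w)) x w" for j
  have fj: "f j = w [j, i] * (w [j] / Lmin x w) + w [i] * totD 1 j (\<lambda>x w. w [j] / Lmin x w) x w" for j
    unfolding f_def by (subst T_mult[OF cc_w CC_divL[OF cc_w]]) (simp add: T_w)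
  have "totD 1 i (\<lambda>x w. w [i] * wpd [i] Lmin x w - Lmin x w) x w
      = f i - totD 1 i Lmin x w"
    unfolding f_def by (simp add: T_diff CC_simps)
  moreover have "(\<Sum>j\<in>UNIV - {i}. totD 1 j (\<lambda>x w. w [i] * wpd [j] Lmin x w) x w) = (\<Sum>j\<in>UNIV - {i}. f j)"
    unfolding f_def by simp
  moreover have "f i + (\<Sum>j\<in>UNIV - {i}. f j) = (\<Sum>j\<in>UNIV. f j)"
    by (simp add: sum.remove)
  moreover have "(\<Sum>j\<in>UNIV. f j) = (\<Sum>j\<in>UNIV. w [j, i] * (w [j] / Lmin x w)) + w [i] * (\<Sum>j\<in>UNIV. totD 1 j (\<lambda>x w. w [j] / Lmin x w) x w)"
    unfolding fj by (simp add: sum.distrib sum_distrib_left)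
  moreover have "(\<Sum>j\<in>UNIV. w [j, i] * (w [j] / Lmin x w)) = totD 1 i Lmin x w"
    by (simp add: T_L sum_divide_distrib sym2[OF s, of _ i] mult.commute)
  ultimately show ?thesis using Einf_div[OF E] by simp
qed

lemma T_gq: "CC g \<Longrightarrow> totD 1 k (\<lambda>x w. g x w * w [k] / Lmin x w) x w
   = totD 1 k g x w * (w [k] / Lmin x w) + g x w * totD 1 k (\<lambda>x w. w [k] / Lmin x w) x w"
proof -
  assume g: "CC g"
  have "(\<lambda>x w. g x w * w [k] / Lmin x w) = (\<lambda>x w. g x w * (w [k] / Lmin x w))" by simp
  then show ?thesis using T_mult[where f=g and g="\<lambda>x w. w [k] / Lmin x w" and m=1 and i=k and x=x and w=w, OF g CC_divL[OF cc_w]] by simp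
qed

lemma CC_phi3[simp]: "CC (phi3 i j)"
  unfolding phi3_eq by (intro CC_diff cc_mult cc_x cc_w)

lemma ev3: "evder 1 (phi3 i j) 1 Lmin x w = x $ j * ((\<Sum>k\<in>UNIV. w [k, i] * w [k]) / Lmin x w) - x $ i * ((\<Sum>k\<in>UNIV. w [k, j] * w [k]) / Lmin x w)"
proof -
  have "evder 1 (phi3 i j) 1 Lmin x w = (\<Sum>k\<in>UNIV.
      ((if j = k then 1 else 0) * w [i] + x $ j * w [k, i] - ((if i = k then 1 else 0) * w [j] + x $ i * w [k, j])) * (w [k] / Lmin x w))"
    unfolding evder_def sum_le1 by (simp add: phi3_eq T_w T_x T_mult T_diff CC_simps)
  also have "\<dots> = x $ j * ((\<Sum>k\<in>UNIV. w [k, i] * w [k]) / Lmin x w) - x $ i * ((\<Sum>k\<in>UNIV. w [k, j] * w [k]) / Lmin x w)"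
    by (simp add: ind_mult if0_mult if0_div add_divide_distrib diff_divide_distrib distrib_right left_diff_distrib sum.distrib sum_subtractf sum_distrib_left sum_divide_distrib mult.assoc mult.commute[of "w [i]"])
  finally show ?thesis .
qed

lemma sum_phi3: "(\<Sum>k\<in>UNIV. totD 1 k (phi3 i j) x w * (w [k] / Lmin x w)) = evder 1 (phi3 i j) 1 Lmin x w"
  unfolding evder_def sum_le1 by simp

lemma part6:
  assumes E: "Einf x w"
  shows "totD 1 i (\<lambda>x w. x $ j * Lmin x w - phi3 i j x w * w [i] / Lmin x w) x w
         - totD 1 j (\<lambda>x w. x $ i * Lmin x w + phi3 i j x w * w [j] / Lmin x w) x w
         - (\<Sum>k\<in>UNIV - {i, j}. totD 1 k (\<lambda>x w. phi3 i j x w * w [k] / Lmin x w) x w) = 0"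
proof (cases "i = j")
  case True
  have z: "(\<lambda>x w. phi3 i i x w * w [k] / Lmin x w) = (\<lambda>x w. 0)" for k
    by (simp add: fun_eq_iff phi3_def)
  have "phi3 i i x w = 0" for x w by (simp add: phi3_def)
  then show ?thesis using True by (simp add: z T_const)
next
  case False
  have s: "symjet w" using Einf_sym[OF E] .
  define F where "F k = totD 1 k (\<lambda>x w. phi3 i j x w * w [k] / Lmin x w) x w" for k
  have Fk: "F k = totD 1 k (phi3 i j) x w * (w [k] / Lmin x w) + phi3 i j x w * totD 1 k (\<lambda>x w. w [k] / Lmin x w) x w" for k
    unfolding F_def by (rule T_gq[OF CC_phi3])
  have sF: "(\<Sum>k\<in>UNIV. F k) = evder 1 (phi3 i j) 1 Lmin x w"
    unfolding Fk sum.distrib sum_phi3 sum_distrib_left[symmetric] Einf_div[OF E] by simp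
  have "(\<Sum>k\<in>UNIV. F k) = F i + F j + (\<Sum>k\<in>UNIV - {i, j}. F k)"
  proof -
    have "(\<Sum>k\<in>UNIV. F k) = F i + (\<Sum>k\<in>UNIV - {i}. F k)" by (simp add: sum.remove)
    moreover have "(\<Sum>k\<in>UNIV - {i}. F k) = F j + (\<Sum>k\<in>UNIV - {i} - {j}. F k)"
      using False by (subst sum.remove[of _ j]) auto
    moreover have "UNIV - {i} - {j} = UNIV - {i, j}" by auto
    ultimately show ?thesis by simp
  qed
  moreover have "totD 1 i (\<lambda>x w. x $ j * Lmin x w - phi3 i j x w * w [i] / Lmin x w) x w = x $ j * totD 1 i Lmin x w - F i"
    unfolding F_def using False
    by (subst T_diff) (auto simp: T_mult T_x CC_simps intro!: CC_divL)
  moreover have "totD 1 j (\<lambda>x w. x $ i * Lmin x w + phi3 i j x w * w [j] / Lmin x w) x w = x $ i * totD 1 j Lmin x w + F j"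
    unfolding F_def using False
    by (subst T_add) (auto simp: T_mult T_x CC_simps intro!: CC_divL)
  ultimately have "totD 1 i (\<lambda>x w. x $ j * Lmin x w - phi3 i j x w * w [i] / Lmin x w) x w
         - totD 1 j (\<lambda>x w. x $ i * Lmin x w + phi3 i j x w * w [j] / Lmin x w) x w
         - (\<Sum>k\<in>UNIV - {i, j}. totD 1 k (\<lambda>x w. phi3 i j x w * w [k] / Lmin x w) x w)
       = x $ j * totD 1 i Lmin x w - x $ i * totD 1 j Lmin x w - evder 1 (phi3 i j) 1 Lmin x w"
    unfolding F_def sF[symmetric] by simp
  also have "\<dots> = 0"
    unfolding ev3 by (simp add: T_L sym2[OF s, of _ i] sym2[OF s, of _ j] mult.commute)
  finally show ?thesis .
qed



lemma deriv_s: "deriv (\<lambda>t. (s(k := s k + t)) i - a - b + c) 0 = (if k = i then 1 else (0::real))"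
proof (cases "k = i")
  case True
  then have "((\<lambda>t. (s(k := s k + t)) i - a - b + c) has_real_derivative 1) (at 0)"
    by (simp, auto intro!: derivative_eq_intros)
  then show ?thesis using True by (simp add: DERIV_imp_deriv)
next
  case False
  then have "(\<lambda>t. (s(k := s k + t)) i - a - b + c) = (\<lambda>t. s i - a - b + c)"
    by (auto simp: fun_eq_iff)
  then show ?thesis using False by simp
qed

lemma CC_X: "CC (\<lambda>(x::real^'n::finite) w. \<Sum>j\<in>UNIV. x $ j * w [j::'n])"
  by (intro CC_sum cc_mult cc_x cc_w) auto

lemma T_X: "totD 1 i (\<lambda>(x::real^'n::finite) w. \<Sum>j\<in>UNIV. x $ j * w [j::'n]) x w = w [i] + (\<Sum>j\<in>UNIV. x $ j * w [i, j])"
proof -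
  have "totD 1 i (\<lambda>(x::real^'n::finite) w. \<Sum>j\<in>UNIV. x $ j * w [j::'n]) x w = (\<Sum>j\<in>UNIV. (if j = i then 1 else 0) * w [j] + x $ j * w [i, j])"
    by (simp add: T_sum T_mult T_x T_w CC_simps)
  then show ?thesis by (simp add: ind_mult sum.distrib)
qed

lemma part9_i:
  fixes S :: "'n::finite \<Rightarrow> 'n \<Rightarrow> 'n dfun"
  assumes Sii: "S i i = Lmin"
  shows "tDc 1 S i (\<lambda>x w s. s i - x $ i * Lmin x w
                 - w [] * w [i] / sqrt (1 + (\<Sum>j\<in>UNIV. (w [j])\<^sup>2))
                 + w [i] * (\<Sum>j\<in>UNIV. x $ j * w [j]) / sqrt (1 + (\<Sum>k\<in>UNIV. (w [k])\<^sup>2))) x w s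
    = - (x $ i * totD 1 i Lmin x w)
      + (\<Sum>j\<in>UNIV. x $ j * w [i, j]) * (w [i] / Lmin x w)
      + ((\<Sum>j\<in>UNIV. x $ j * w [j]) - w []) * totD 1 i (\<lambda>x w. w [i] / Lmin x w) x w"
proof -
  let ?X = "\<lambda>(x::real^'n) w. \<Sum>j\<in>UNIV. x $ j * w [j]"
  have fe: "(\<lambda>x' w'. s i - x' $ i * Lmin x' w'
                 - w' [] * w' [i] / sqrt (1 + (\<Sum>j\<in>UNIV. (w' [j])\<^sup>2))
                 + w' [i] * (\<Sum>j\<in>UNIV. x' $ j * w' [j]) / sqrt (1 + (\<Sum>k\<in>UNIV. (w' [k])\<^sup>2)))
       = (\<lambda>x w. (s i - x $ i * Lmin x w - w [] * w [i] / Lmin x w) + ?X x w * w [i] / Lmin x w)"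
    by (simp add: fun_eq_iff Lmin_def mult.commute)
  have c1: "CC (\<lambda>x w. s i - x $ i * Lmin x w - w [] * w [i] / Lmin x w)"
    by (intro CC_diff cc_const cc_mult cc_x CC_Lmin CC_divL cc_w)
  have c2: "CC (\<lambda>x w. ?X x w * w [i] / Lmin x w)"
    by (intro CC_divL cc_mult CC_X cc_w)
  have c3: "CC (\<lambda>x w. s i - x $ i * Lmin x w)"
    by (intro CC_diff cc_const cc_mult cc_x CC_Lmin)
  have c4: "CC (\<lambda>x w. w [] * w [i] / Lmin x w)"
    by (intro CC_divL cc_mult cc_w)
  have t1: "totD 1 i (\<lambda>x w. s i - x $ i * Lmin x w) x w = - (Lmin x w + x $ i * totD 1 i Lmin x w)"
    by (subst T_diff[OF cc_const]) (auto simp: T_const T_mult T_x CC_simps)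
  have t2: "totD 1 i (\<lambda>x w. w [] * w [i] / Lmin x w) x w = w [i] * (w [i] / Lmin x w) + w [] * totD 1 i (\<lambda>x w. w [i] / Lmin x w) x w"
    by (subst T_gq[OF cc_w]) (simp add: T_w)
  have t3: "totD 1 i (\<lambda>x w. ?X x w * w [i] / Lmin x w) x w = (w [i] + (\<Sum>j\<in>UNIV. x $ j * w [i, j])) * (w [i] / Lmin x w) + ?X x w * totD 1 i (\<lambda>x w. w [i] / Lmin x w) x w"
    by (subst T_gq[OF CC_X]) (simp add: T_X[simplified])
  have tot: "totD 1 i (\<lambda>x' w'. s i - x' $ i * Lmin x' w'
                 - w' [] * w' [i] / sqrt (1 + (\<Sum>j\<in>UNIV. (w' [j])\<^sup>2))
                 + w' [i] * (\<Sum>j\<in>UNIV. x' $ j * w' [j]) / sqrt (1 + (\<Sum>k\<in>UNIV. (w' [k])\<^sup>2))) x w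
     = - (Lmin x w + x $ i * totD 1 i Lmin x w) - (w [i] * (w [i] / Lmin x w) + w [] * totD 1 i (\<lambda>x w. w [i] / Lmin x w) x w)
       + ((w [i] + (\<Sum>j\<in>UNIV. x $ j * w [i, j])) * (w [i] / Lmin x w) + ?X x w * totD 1 i (\<lambda>x w. w [i] / Lmin x w) x w)"
    unfolding fe T_add[OF c1 c2] T_diff[OF c3 c4] t1 t2 t3 ..
  have ds: "(\<Sum>k\<in>UNIV. S i k x w * deriv (\<lambda>t. (s(k := s k + t)) i - x $ i * Lmin x w
                 - w [] * w [i] / sqrt (1 + (\<Sum>j\<in>UNIV. (w [j])\<^sup>2))
                 + w [i] * (\<Sum>j\<in>UNIV. x $ j * w [j]) / sqrt (1 + (\<Sum>k\<in>UNIV. (w [k])\<^sup>2))) 0) = Lmin x w"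
    by (simp only: deriv_s ind_mult2) (simp add: Sii)
  show ?thesis
    unfolding tDc_def tot ds by (simp add: algebra_simps)
qed

lemma part9:
  fixes S :: "'n::finite \<Rightarrow> 'n \<Rightarrow> 'n dfun"
  assumes Sii: "\<forall>i. S i i = Lmin" and E: "Einf x w"
  shows "(\<Sum>i\<in>UNIV. tDc 1 S i
              (\<lambda>x w s. s i - x $ i * Lmin x w
                 - w [] * w [i] / sqrt (1 + (\<Sum>j\<in>UNIV. (w [j])\<^sup>2))
                 + w [i] * (\<Sum>j\<in>UNIV. x $ j * w [j]) / sqrt (1 + (\<Sum>k\<in>UNIV. (w [k])\<^sup>2)))
              x w s) = 0"
proof -
  have s: "symjet w" using Einf_sym[OF E] .
  have "(\<Sum>i\<in>UNIV. tDc 1 S i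
              (\<lambda>x w s. s i - x $ i * Lmin x w
                 - w [] * w [i] / sqrt (1 + (\<Sum>j\<in>UNIV. (w [j])\<^sup>2))
                 + w [i] * (\<Sum>j\<in>UNIV. x $ j * w [j]) / sqrt (1 + (\<Sum>k\<in>UNIV. (w [k])\<^sup>2)))
              x w s)
    = (\<Sum>i\<in>UNIV. - (x $ i * totD 1 i Lmin x w)
      + (\<Sum>j\<in>UNIV. x $ j * w [i, j]) * (w [i] / Lmin x w)
      + ((\<Sum>j\<in>UNIV. x $ j * w [j]) - w []) * totD 1 i (\<lambda>x w. w [i] / Lmin x w) x w)"
    by (rule sum.cong[OF refl], rule part9_i) (use Sii in auto)
  also have "\<dots> = - (\<Sum>i\<in>UNIV. x $ i * totD 1 i Lmin x w) + (\<Sum>i\<in>UNIV. (\<Sum>j\<in>UNIV. x $ j * w [i, j]) * (w [i] / Lmin x w))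
      + ((\<Sum>j\<in>UNIV. x $ j * w [j]) - w []) * (\<Sum>i\<in>UNIV. totD 1 i (\<lambda>x w. w [i] / Lmin x w) x w)"
    by (simp add: sum.distrib sum_negf sum_distrib_left sum_subtractf)
  also have "\<dots> = 0"
  proof -
    have a: "(\<Sum>i\<in>UNIV. x $ i * totD 1 i Lmin x w) = (\<Sum>k\<in>UNIV. x $ k * (\<Sum>c\<in>UNIV. w [c] * w [k, c])) / Lmin x w"
      by (simp add: T_L sum_divide_distrib[symmetric])
    have b: "(\<Sum>i\<in>UNIV. (\<Sum>j\<in>UNIV. x $ j * w [i, j]) * (w [i] / Lmin x w)) = (\<Sum>k\<in>UNIV. (\<Sum>c\<in>UNIV. x $ c * w [k, c]) * w [k]) / Lmin x w"
      by (simp add: sum_divide_distrib[symmetric])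
    show ?thesis unfolding a b swap4[OF s] Einf_div[OF E] by simp
  qed
  finally show ?thesis .
qed



definition qf :: "'n::finite \<Rightarrow> 'n dfun" where "qf a = (\<lambda>x w. w [a] / Lmin x w)"
definition Nf :: "'n::finite \<Rightarrow> 'n \<Rightarrow> 'n dfun" where
  "Nf a c = (\<lambda>x w. (if a = c then 1 else 0) / Lmin x w - w [a] * w [c] / (Lmin x w)^3)"
definition Af :: "'n::finite \<Rightarrow> 'n dfun" where "Af k = (\<lambda>x w. - (\<Sum>c\<in>UNIV. x $ c * w [k, c]))"

lemma CC_qf[simp]: "CC (qf a)" unfolding qf_def by (intro CC_divL cc_w)

lemma CC_invL3: "CC (\<lambda>x w. inverse ((Lmin x w)^3))"
proof -
  have "CC (\<lambda>x w. (inverse (Lmin x w))^3)" by (intro CC_pow CC_invL)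
  then show ?thesis by (simp add: power_inverse)
qed

lemma CC_Nf[simp]: "CC (Nf a c)"
proof -
  have "CC (\<lambda>x w. (if a = c then 1 else 0) * inverse (Lmin x w) - (w [a] * w [c]) * inverse ((Lmin x w)^3))"
    by (intro CC_diff cc_mult cc_const CC_invL CC_invL3 cc_w)
  then show ?thesis unfolding Nf_def by (simp add: divide_inverse)
qed

lemma CC_Af[simp]: "CC (Af k)" unfolding Af_def by (intro CC_minus CC_sum cc_mult cc_x cc_w) auto

lemma Nf_sym: "Nf a c = Nf c a" unfolding Nf_def by (auto simp: fun_eq_iff mult.commute)

lemma order_le_qf: "order_le 1 (qf a)"
  unfolding order_le_def qf_def Lmin_def by (auto simp: lists_le_def)

lemma order_le_Nf: "order_le 1 (Nf a c)"
  unfolding order_le_def Nf_def Lmin_def by (auto simp: lists_le_def)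

lemma T_qf: "1 \<le> m \<Longrightarrow> totD m b (qf a) x w = (\<Sum>c\<in>UNIV. w [b, c] * Nf a c x w)"
proof -
  assume m: "1 \<le> m"
  have "(\<Sum>c\<in>UNIV. w [b, c] * Nf a c x w) = (\<Sum>c\<in>UNIV. (if a = c then w [b, c] / Lmin x w else 0) - w [a] * (w [c] * w [b, c]) / (Lmin x w)^3)"
    unfolding Nf_def by (rule sum.cong) (auto simp: algebra_simps)
  also have "\<dots> = w [b, a] / Lmin x w - w [a] * (\<Sum>c\<in>UNIV. w [c] * w [b, c]) / (Lmin x w)^3"
    by (simp add: sum_subtractf sum_distrib_left[symmetric] sum_divide_distrib[symmetric])
  finally show ?thesis unfolding qf_def using Tq[OF m] by simp
qed

lemma E_eq: "evder 1 phi4 1 Lmin = (\<lambda>x w. \<Sum>k\<in>UNIV. Af k x w * qf k x w)"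
  unfolding evder_def sum_le1 by (simp add: fun_eq_iff T_phi4 Af_def qf_def)

lemma D_q: "dline v d (qf a) x w = d [a] / Lmin x w - w [a] * (\<Sum>c\<in>UNIV. w [c] * d [c]) / (Lmin x w)^3"
proof -
  have "dline v d (qf a) x w = dline v d (\<lambda>x w. w [a] * inverse (Lmin x w)) x w"
    unfolding qf_def by (simp add: divide_inverse)
  also have "\<dots> = d [a] * inverse (Lmin x w) + w [a] * (- dline v d Lmin x w / (Lmin x w)^2)"
    by (simp add: D_mult[OF cc_w CC_invL] D_inv[OF CC_Lmin Lmin_nz] D_w)
  finally show ?thesis by (simp add: D_L divide_inverse power2_eq_square power3_eq_cube algebra_simps)
qed

lemma D_A: "dline v d (Af k) x w = - (\<Sum>c\<in>UNIV. v $ c * w [k, c] + x $ c * d [k, c])"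
  unfolding Af_def by (simp add: D_minus D_sum D_mult D_x D_w CC_simps)

lemma wpdE0: "wpd [] (evder 1 phi4 1 Lmin) = (\<lambda>x w. 0)"
  unfolding E_eq wpd_dline
  by (simp add: fun_eq_iff D_sum D_mult D_q D_A dl_def CC_simps)

lemma dl_simps[simp]: "dl [b] [c] = (if c = b then 1 else 0)" "dl [b] [k, c] = 0" "dl [a, b] [c] = 0"
  "dl [a, b] [k, c] = (if k = a \<and> c = b then 1 else 0)" "dl [] [c] = 0" "dl [] [k, c] = 0"
  by (auto simp: dl_def)

lemma wpdE1: "wpd [b] (evder 1 phi4 1 Lmin) = (\<lambda>x w. \<Sum>k\<in>UNIV. Af k x w * Nf k b x w)"
proof (rule ext)+
  fix x w
  have "wpd [b] (evder 1 phi4 1 Lmin) x w = (\<Sum>k\<in>UNIV. dline 0 (dl [b]) (Af k) x w * qf k x w + Af k x w * dline 0 (dl [b]) (qf k) x w)"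
    unfolding E_eq wpd_dline by (simp add: D_sum D_mult CC_simps)
  also have "\<dots> = (\<Sum>k\<in>UNIV. Af k x w * Nf k b x w)"
  proof (rule sum.cong[OF refl])
    fix k
    have "(\<Sum>c\<in>UNIV. w [c] * dl [b] [c]) = w [b]" by (simp add: ind_mult2)
    then show "dline 0 (dl [b]) (Af k) x w * qf k x w + Af k x w * dline 0 (dl [b]) (qf k) x w = Af k x w * Nf k b x w"
      by (simp add: D_A D_q Nf_def)
  qed
  finally show "wpd [b] (evder 1 phi4 1 Lmin) x w = (\<Sum>k\<in>UNIV. Af k x w * Nf k b x w)" .
qed

lemma wpdE2: "wpd [a, b] (evder 1 phi4 1 Lmin) = (\<lambda>x w. (- x $ b) * qf a x w)"
proof (rule ext)+
  fix x w
  have "wpd [a, b] (evder 1 phi4 1 Lmin) x w = (\<Sum>k\<in>UNIV. dline 0 (dl [a, b]) (Af k) x w * qf k x w + Af k x w * dline 0 (dl [a, b]) (qf k) x w)"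
    unfolding E_eq wpd_dline by (simp add: D_sum D_mult CC_simps)
  also have "\<dots> = (\<Sum>k\<in>UNIV. if k = a then (- x $ b) * qf a x w else 0)"
  proof (rule sum.cong[OF refl])
    fix k
    have "(\<Sum>c\<in>UNIV. x $ c * dl [a, b] [k, c]) = (if k = a then x $ b else 0)"
      by (simp add: ind_mult2 cong: if_cong)
    then show "dline 0 (dl [a, b]) (Af k) x w * qf k x w + Af k x w * dline 0 (dl [a, b]) (qf k) x w = (if k = a then (- x $ b) * qf a x w else 0)"
      by (simp add: D_A D_q)
  qed
  finally show "wpd [a, b] (evder 1 phi4 1 Lmin) x w = (- x $ b) * qf a x w" by simp
qed

lemma lists_le2: "lists_le 2 = insert [] (range (\<lambda>k. [k]) \<union> (\<lambda>(a, b). [a, b]) ` UNIV)"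
proof -
  have A: "l \<in> lists_le 2 \<longleftrightarrow> l = [] \<or> (\<exists>k. l = [k]) \<or> (\<exists>a b. l = [a, b])" for l :: "'a list"
    by (cases l; cases "tl l"; auto simp: lists_le_def)
  have B: "(\<exists>a b. l = [a, b]) \<longleftrightarrow> l \<in> (\<lambda>(a, b). [a, b]) ` (UNIV :: ('a \<times> 'a) set)" for l :: "'a list"
    by (auto simp: image_iff)
  show ?thesis
  proof (rule set_eqI)
    fix l :: "'a list"
    show "l \<in> lists_le 2 \<longleftrightarrow> l \<in> insert [] (range (\<lambda>k. [k]) \<union> (\<lambda>(a, b). [a, b]) ` UNIV)"
      unfolding A B[symmetric] by auto
  qed
qed

lemma sum_le2: "(\<Sum>l\<in>lists_le 2. f l) = f [] + (\<Sum>k\<in>UNIV. f [k]) + (\<Sum>a\<in>UNIV. \<Sum>b\<in>UNIV. f [a, b])"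
proof -
  have d: "[] \<notin> range (\<lambda>k. [k]) \<union> (\<lambda>(a, b). [a, b]) ` UNIV" by auto
  have d2: "range (\<lambda>k. [k]) \<inter> (\<lambda>(a, b). [a, b]) ` UNIV = {}" by auto
  have "(\<Sum>l\<in>lists_le 2. f l) = f [] + (sum f (range (\<lambda>k. [k])) + sum f ((\<lambda>(a, b). [a, b]) ` UNIV))"
    unfolding lists_le2 
    apply (subst sum.insert)
      apply simp
     apply (rule d)
    apply (subst sum.union_disjoint)
    using d2 by auto
  also have "sum f (range (\<lambda>k. [k])) = (\<Sum>k\<in>UNIV. f [k])"
    by (subst sum.reindex) (auto simp: inj_on_def)
  also have "sum f ((\<lambda>(a, b). [a, b]) ` UNIV) = (\<Sum>p\<in>UNIV. f (case p of (a, b) \<Rightarrow> [a, b]))"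
    by (subst sum.reindex) (auto simp: inj_on_def)
  also have "\<dots> = (\<Sum>a\<in>UNIV. \<Sum>b\<in>UNIV. f [a, b])"
    by (simp add: sum.cartesian_product UNIV_Times_UNIV[symmetric] del: UNIV_Times_UNIV)
       (rule sum.cong, auto split: prod.splits)
  finally show ?thesis by (simp add: add.assoc)
qed

lemma EL2_E: "EL 2 (evder 1 phi4 1 Lmin) x w =
   - (\<Sum>b\<in>UNIV. totD 2 b (\<lambda>x w. \<Sum>k\<in>UNIV. Af k x w * Nf k b x w) x w)
   + (\<Sum>a\<in>UNIV. \<Sum>b\<in>UNIV. totD 3 a (totD 2 b (\<lambda>x w. (- x $ b) * qf a x w)) x w)"
  unfolding EL_def sum_le2 by (simp add: wpdE0[simplified] wpdE1[simplified] wpdE2[simplified] T_const sum_negf)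



lemma tr_Nf: "1 \<le> m \<Longrightarrow> totD m a (Nf k c) x w = totD 1 a (Nf k c) x w"
  by (rule totD_trunc[OF order_le_Nf])

lemma tr_qf: "1 \<le> m \<Longrightarrow> totD m a (qf k) x w = totD 1 a (qf k) x w"
  by (rule totD_trunc[OF order_le_qf])

lemma I_ab: "totD 2 b (\<lambda>x w. (- x $ b) * qf a x w) = (\<lambda>x w. - qf a x w + (- x $ b) * (\<Sum>c\<in>UNIV. w [b, c] * Nf a c x w))"
proof (rule ext)+
  fix x w
  show "totD 2 b (\<lambda>x w. (- x $ b) * qf a x w) x w = - qf a x w + (- x $ b) * (\<Sum>c\<in>UNIV. w [b, c] * Nf a c x w)"
    by (subst T_mult[OF CC_minus[OF cc_x] CC_qf]) (simp add: T_minus T_x T_qf CC_simps)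
qed

lemma C_ab: "totD 3 a (totD 2 b (\<lambda>x w. (- x $ b) * qf a x w)) x w
  = - totD 1 a (qf a) x w - (if b = a then 1 else 0) * (\<Sum>c\<in>UNIV. w [b, c] * Nf a c x w)
    - x $ b * (\<Sum>c\<in>UNIV. w [a, b, c] * Nf a c x w + w [b, c] * totD 1 a (Nf a c) x w)"
proof -
  have c1: "CC (\<lambda>x w. - qf a x w)" by (intro CC_minus CC_qf)
  have c2: "CC (\<lambda>x w. (- x $ b) * (\<Sum>c\<in>UNIV. w [b, c] * Nf a c x w))"
    by (intro cc_mult CC_minus cc_x CC_sum cc_w CC_Nf) auto
  have c3: "CC (\<lambda>x w. \<Sum>c\<in>UNIV. w [b, c] * Nf a c x w)"
    by (intro CC_sum cc_mult cc_w CC_Nf) auto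
  have "totD 3 a (\<lambda>x w. - qf a x w + (- x $ b) * (\<Sum>c\<in>UNIV. w [b, c] * Nf a c x w)) x w
    = - totD 3 a (qf a) x w + ((- (if b = a then 1 else 0)) * (\<Sum>c\<in>UNIV. w [b, c] * Nf a c x w)
      + (- x $ b) * totD 3 a (\<lambda>x w. \<Sum>c\<in>UNIV. w [b, c] * Nf a c x w) x w)"
    apply (subst T_add[OF c1 c2])
    apply (subst T_minus[OF CC_qf])
    apply (subst T_mult[OF CC_minus[OF cc_x] c3])
    apply (subst T_minus[OF cc_x])
    apply (simp add: T_x)
    done
  also have "totD 3 a (\<lambda>x w. \<Sum>c\<in>UNIV. w [b, c] * Nf a c x w) x w = (\<Sum>c\<in>UNIV. w [a, b, c] * Nf a c x w + w [b, c] * totD 1 a (Nf a c) x w)"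
    by (simp add: T_sum T_mult T_w lists_le_def tr_Nf[of 3] CC_simps)
  finally show ?thesis unfolding I_ab by (simp add: tr_qf[of 3])
qed

lemma T_Af: "totD 2 b (Af k) x w = - (\<Sum>c\<in>UNIV. (if c = b then 1 else 0) * w [k, c] + x $ c * w [b, k, c])"
  unfolding Af_def by (simp add: T_minus T_sum T_mult T_x T_w lists_le_def CC_simps)

lemma B_b: "totD 2 b (\<lambda>x w. \<Sum>k\<in>UNIV. Af k x w * Nf k b x w) x w
  = (\<Sum>k\<in>UNIV. - (\<Sum>c\<in>UNIV. (if c = b then 1 else 0) * w [k, c] + x $ c * w [b, k, c]) * Nf k b x w + Af k x w * totD 1 b (Nf k b) x w)"
  by (simp add: T_sum T_mult T_Af tr_Nf[of 2] CC_simps)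

lemma sym3: "symjet w \<Longrightarrow> w [a, b, c] = w [a, c, b]"
  by (rule symjetD) (auto simp: add_mset_commute)

lemma part8_EL2:
  assumes E: "Einf x w"
  shows "EL 2 (evder 1 phi4 1 Lmin) x w = 0"
proof -
  have s: "symjet w" using Einf_sym[OF E] .
  let ?N = "\<lambda>k b. Nf k b x w"
  let ?DN = "\<lambda>a k b. totD 1 a (Nf k b) x w"
  define P1 where "P1 = (\<Sum>b\<in>UNIV. \<Sum>k\<in>UNIV. w [k, b] * ?N k b)"
  define P2 where "P2 = (\<Sum>b\<in>UNIV. \<Sum>k\<in>UNIV. (\<Sum>c\<in>UNIV. x $ c * w [b, k, c]) * ?N k b)"
  define P3 where "P3 = (\<Sum>b\<in>UNIV. \<Sum>k\<in>UNIV. (\<Sum>c\<in>UNIV. x $ c * w [k, c]) * ?DN b k b)"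
  define Q1 where "Q1 = (\<Sum>a\<in>UNIV. \<Sum>c\<in>UNIV. w [a, c] * ?N a c)"
  define Q2 where "Q2 = (\<Sum>a\<in>UNIV. \<Sum>b\<in>UNIV. x $ b * (\<Sum>c\<in>UNIV. w [a, b, c] * ?N a c))"
  define Q3 where "Q3 = (\<Sum>a\<in>UNIV. \<Sum>b\<in>UNIV. x $ b * (\<Sum>c\<in>UNIV. w [b, c] * ?DN a a c))"
  define DQ where "DQ = (\<Sum>a\<in>UNIV. totD 1 a (qf a) x w)"
  have DQ0: "DQ = 0" unfolding DQ_def qf_def using Einf_div[OF E] by simp
  have Bb: "totD 2 b (\<lambda>x w. \<Sum>k\<in>UNIV. Af k x w * Nf k b x w) x w
     = - (\<Sum>k\<in>UNIV. w [k, b] * ?N k b) - (\<Sum>k\<in>UNIV. (\<Sum>c\<in>UNIV. x $ c * w [b, k, c]) * ?N k b)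
       - (\<Sum>k\<in>UNIV. (\<Sum>c\<in>UNIV. x $ c * w [k, c]) * ?DN b k b)" for b
  proof -
    have "totD 2 b (\<lambda>x w. \<Sum>k\<in>UNIV. Af k x w * Nf k b x w) x w
      = (\<Sum>k\<in>UNIV. - (w [k, b] * ?N k b) - (\<Sum>c\<in>UNIV. x $ c * w [b, k, c]) * ?N k b
       - (\<Sum>c\<in>UNIV. x $ c * w [k, c]) * ?DN b k b)"
      unfolding B_b by (rule sum.cong[OF refl]) (simp add: Af_def ind_mult sum.distrib algebra_simps)
    then show ?thesis by (simp add: sum_subtractf sum_negf)
  qed
  have sB: "- (\<Sum>b\<in>UNIV. totD 2 b (\<lambda>x w. \<Sum>k\<in>UNIV. Af k x w * Nf k b x w) x w) = P1 + P2 + P3"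
    unfolding Bb P1_def P2_def P3_def by (simp add: sum_subtractf sum_negf)
  have Cab: "totD 3 a (totD 2 b (\<lambda>x w. (- x $ b) * qf a x w)) x w
     = - totD 1 a (qf a) x w - (if b = a then (\<Sum>c\<in>UNIV. w [a, c] * ?N a c) else 0)
       - x $ b * (\<Sum>c\<in>UNIV. w [a, b, c] * ?N a c) - x $ b * (\<Sum>c\<in>UNIV. w [b, c] * ?DN a a c)" for a b
    unfolding C_ab by (simp add: sum.distrib algebra_simps)
  have sC: "(\<Sum>a\<in>UNIV. \<Sum>b\<in>UNIV. totD 3 a (totD 2 b (\<lambda>x w. (- x $ b) * qf a x w)) x w)
     = - real CARD('a) * DQ - Q1 - Q2 - Q3"
    unfolding Cab Q1_def Q2_def Q3_def DQ_def by (simp add: sum_subtractf sum_negf sum_distrib_left)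
  have e1: "P1 = Q1" unfolding P1_def Q1_def by (rule sum.swap)
  have e2: "P2 = Q2"
  proof -
    have "Q2 = (\<Sum>a\<in>UNIV. \<Sum>b\<in>UNIV. \<Sum>c\<in>UNIV. x $ b * w [a, b, c] * ?N a c)"
      unfolding Q2_def by (simp add: sum_distrib_left mult.assoc)
    also have "\<dots> = (\<Sum>a\<in>UNIV. \<Sum>c\<in>UNIV. \<Sum>b\<in>UNIV. x $ b * w [a, b, c] * ?N a c)"
      by (rule sum.cong[OF refl], rule sum.swap)
    also have "\<dots> = (\<Sum>a\<in>UNIV. \<Sum>c\<in>UNIV. \<Sum>b\<in>UNIV. x $ b * w [a, c, b] * ?N c a)"
      apply (intro sum.cong refl) apply (subst sym3[OF s]) apply (subst Nf_sym) apply (rule refl) done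
    also have "\<dots> = P2"
      unfolding P2_def by (intro sum.cong refl) (simp add: sum_distrib_right)
    finally show ?thesis by simp
  qed
  have e3: "P3 = Q3"
  proof -
    have "Q3 = (\<Sum>a\<in>UNIV. \<Sum>b\<in>UNIV. \<Sum>c\<in>UNIV. x $ b * w [b, c] * ?DN a a c)"
      unfolding Q3_def by (simp add: sum_distrib_left mult.assoc)
    also have "\<dots> = (\<Sum>a\<in>UNIV. \<Sum>c\<in>UNIV. \<Sum>b\<in>UNIV. x $ b * w [b, c] * ?DN a a c)"
      by (rule sum.cong[OF refl], rule sum.swap)
    also have "\<dots> = (\<Sum>a\<in>UNIV. \<Sum>c\<in>UNIV. \<Sum>b\<in>UNIV. x $ b * w [c, b] * ?DN a c a)"
      apply (intro sum.cong refl) apply (subst sym2[OF s]) apply (subst Nf_sym) apply (rule refl) done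
    also have "\<dots> = P3"
      unfolding P3_def by (intro sum.cong refl) (simp add: sum_distrib_right)
    finally show ?thesis by simp
  qed
  show ?thesis
    unfolding EL2_E sC using sB e1 e2 e3 DQ0 by simp
qed


theorem proposition4:
  fixes n :: nat
  assumes "n = CARD('n::finite)"
  shows
   "total_div_on (Jinf :: real^'n \<Rightarrow> _) (evder 0 phi1 1 Lmin)
    \<and> (\<forall>i::'n. total_div_on Jinf (evder 1 (phi2 i) 1 Lmin))
    \<and> (\<forall>i j::'n. total_div_on Jinf (evder 1 (phi3 i j) 1 Lmin))
    \<and> (\<forall>x (w :: 'n list \<Rightarrow> real). Einf x w \<longrightarrow>
         (\<Sum>i\<in>UNIV. totD 1 i (wpd [i] Lmin) x w) = 0)
    \<and> (\<forall>(i::'n) x w. Einf x w \<longrightarrow>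
         totD 1 i (\<lambda>x w. w [i] * wpd [i] Lmin x w - Lmin x w) x w
         + (\<Sum>j\<in>UNIV - {i}. totD 1 j (\<lambda>x w. w [i] * wpd [j] Lmin x w) x w) = 0)
    \<and> (\<forall>(i::'n) j x w. Einf x w \<longrightarrow>
         totD 1 i (\<lambda>x w. x $ j * Lmin x w - phi3 i j x w * w [i] / Lmin x w) x w
         - totD 1 j (\<lambda>x w. x $ i * Lmin x w + phi3 i j x w * w [j] / Lmin x w) x w
         - (\<Sum>k\<in>UNIV - {i, j}. totD 1 k (\<lambda>x w. phi3 i j x w * w [k] / Lmin x w) x w) = 0)
    \<and> total_div_on (Einf :: real^'n \<Rightarrow> _)
         (\<lambda>x w. evder 1 phi4 1 Lmin x w - real n * Lmin x w)
    \<and> (\<forall>x (w :: 'n list \<Rightarrow> real). Einf x w \<longrightarrow>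
         EL 2 (evder 1 phi4 1 Lmin) x w = real n * EL 1 Lmin x w
         \<and> EL 1 Lmin x w = 0)
    \<and> (\<forall>S :: 'n \<Rightarrow> 'n \<Rightarrow> 'n dfun. (\<forall>i. S i i = Lmin) \<longrightarrow>
         (\<forall>x w s. Einf x w \<longrightarrow>
           (\<Sum>i\<in>UNIV. tDc 1 S i
              (\<lambda>x w s. s i - x $ i * Lmin x w
                 - w [] * w [i] / sqrt (1 + (\<Sum>j\<in>UNIV. (w [j])\<^sup>2))
                 + w [i] * (\<Sum>j\<in>UNIV. x $ j * w [j]) / sqrt (1 + (\<Sum>k\<in>UNIV. (w [k])\<^sup>2)))
              x w s) = 0))"
proof (intro conjI allI impI)
  show "total_div_on (Jinf :: real^'n \<Rightarrow> _) (evder 0 phi1 1 Lmin)" by (rule part1)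
next
  fix i :: 'n show "total_div_on Jinf (evder 1 (phi2 i) 1 Lmin)" by (rule part2)
next
  fix i j :: 'n show "total_div_on Jinf (evder 1 (phi3 i j) 1 Lmin)" by (rule part3)
next
  fix x :: "real^'n" and w :: "'n list \<Rightarrow> real" assume "Einf x w"
  then show "(\<Sum>i\<in>UNIV. totD 1 i (wpd [i] Lmin) x w) = 0" by (rule part4)
next
  fix i :: 'n and x :: "real^'n" and w assume "Einf x w"
  then show "totD 1 i (\<lambda>x w. w [i] * wpd [i] Lmin x w - Lmin x w) x w
         + (\<Sum>j\<in>UNIV - {i}. totD 1 j (\<lambda>x w. w [i] * wpd [j] Lmin x w) x w) = 0" by (rule part5)
next
  fix i j :: 'n and x :: "real^'n" and w assume "Einf x w"
  then show "totD 1 i (\<lambda>x w. x $ j * Lmin x w - phi3 i j x w * w [i] / Lmin x w) x w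
         - totD 1 j (\<lambda>x w. x $ i * Lmin x w + phi3 i j x w * w [j] / Lmin x w) x w
         - (\<Sum>k\<in>UNIV - {i, j}. totD 1 k (\<lambda>x w. phi3 i j x w * w [k] / Lmin x w) x w) = 0" by (rule part6)
next
  show "total_div_on (Einf :: real^'n \<Rightarrow> _) (\<lambda>x w. evder 1 phi4 1 Lmin x w - real n * Lmin x w)"
    using part7 assms by simp
next
  fix x :: "real^'n" and w :: "'n list \<Rightarrow> real" assume E: "Einf x w"
  show "EL 2 (evder 1 phi4 1 Lmin) x w = real n * EL 1 Lmin x w"
    using part8_EL2[OF E] Einf_EL[OF E] by simp
next
  fix x :: "real^'n" and w :: "'n list \<Rightarrow> real" assume E: "Einf x w"
  show "EL 1 Lmin x w = 0" using Einf_EL[OF E] .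
next
  fix S :: "'n \<Rightarrow> 'n \<Rightarrow> 'n dfun" and x :: "real^'n" and w s
  assume "\<forall>i. S i i = Lmin" and "Einf x w"
  then show "(\<Sum>i\<in>UNIV. tDc 1 S i
              (\<lambda>x w s. s i - x $ i * Lmin x w
                 - w [] * w [i] / sqrt (1 + (\<Sum>j\<in>UNIV. (w [j])\<^sup>2))
                 + w [i] * (\<Sum>j\<in>UNIV. x $ j * w [j]) / sqrt (1 + (\<Sum>k\<in>UNIV. (w [k])\<^sup>2)))
              x w s) = 0" by (rule part9)
qed

end
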